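(* Assume (A1'). A function $u:J_T\to\mathbb{R}$ which is upper semicontinuous (resp. lower semicontinuous) is a sub-solution (resp. super-solution) of $u_t+H(x,u_x)=0$ on $J_T$ if and only if for every $\phi\in C^1_*(J_T)$ such that $u\le\phi$ (resp. $u\ge\phi$) on $J_T$ and $u=\phi$ at some $(t,x)\in J_T$: - if $x\in J_i^*$, then $\phi_t(t,x)+H_i(\phi_x(t,x))\le0$ (resp. $\ge0$); - if $x=0$, then either there exists $i\in I_N$ such that $\phi_t(t,0)+H_i(\phi^i_x(t,0))\le0$ (resp. $\ge0$), or $\phi_t(t,0)+\max_{i\in I_N}H_i^-(\phi^i_x(t,0))\le0$ (resp. $\ge0$).
   Context: Junction: fix an integer $N\ge1$ and $N$ distinct unit vectors $e_1,\dots,e_N\in\mathbb{R}^2$. Set $J_i=[0,\infty)e_i$, $J_i^*=J_i\setminus\{0\}$, $J=\bigcup_{i=1}^NJ_i$, $I_N=\{1,\dots,N\}$. Each $x\in J_i$ is written $x=x_ie_i$, $x_i\ge0$. $J$ carries the geodesic distance $d(x,y)=|x-y|$ if $x,y$ lie in a common branch, $d(x,y)=|x|+|y|$ otherwise. $J_T=(0,T)\times J$; balls are taken in $(0,\infty)\times J$. For $u$ on $J_T$, $u^i$ is its restriction to $(0,T)\times J_i$ as a function of $(t,x_i)$; $C^1_*(J_T)$ is the set of continuous $u$ with each $u^i\in C^1((0,T)\times[0,\infty))$; $u^i_x=\partial u^i/\partial x_i$, $u_x=u^i_x$ on $J_i^*$, $u_x(t,0)=(u^1_x(t,0),\dots,u^N_x(t,0))$.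 (A1'): for each $i\in I_N$, $H_i:\mathbb{R}\to\mathbb{R}$ is continuous with $H_i(p)\to+\infty$ as $|p|\to\infty$, and there is $p^i_0\in\mathbb{R}$ such that $H_i$ is non-increasing on $(-\infty,p_0^i]$ and non-decreasing on $[p_0^i,\infty)$. Then $H_i^-(p)=\inf_{q\le0}H_i(p+q)$. $H(x,p)=H_i(p)$ for $x\in J_i^*$, $H(0,p)=\max_iH_i^-(p_i)$ for $p\in\mathbb{R}^N$. Viscosity solutions: $u$ is a sub-solution (resp. super-solution) of $u_t+H(x,u_x)=0$ on $J_T$ if it is u.s.c. (resp. l.s.c.) and for every $\phi\in C^1_*(J_T)$, $P=(t,x)\in J_T$, $r>0$ with $u\le\phi$ (resp. $u\ge\phi$) on $B(P,r)$ and $u(P)=\phi(P)$: if $x\in J_i^*$ then $\phi_t(t,x)+H_i(\phi_x(t,x))\le0$ (resp. $\ge0$); if $x=0$ then $\phi_t(t,0)+\max_iH_i^-(\phi^i_x(t,0))\le0$ (resp. $\ge0$). *)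

theory Defs
  imports "HOL-Analysis.Analysis"
begin

text \<open>A point of J_T is encoded as (i,(t,x)) with i in {1..N},
 0<t<T, x>=0 (x = x_i the coordinate along branch i); points with x = 0 on different
 branches represent the same junction point 0. A function on J_T is encoded by its
 branch restrictions u i (t,x) = u^i(t,x_i), which must agree at x = 0.\<close>

definition inJT :: "nat \<Rightarrow> real \<Rightarrow> nat \<Rightarrow> real \<Rightarrow> real \<Rightarrow> bool" where
  "inJT N T i t x \<longleftrightarrow> i \<in> {1..N} \<and> 0 < t \<and> t < T \<and> 0 \<le> x"

definition jdist :: "nat \<Rightarrow> real \<Rightarrow> nat \<Rightarrow> real \<Rightarrow> real" where
  "jdist i x j y = (if i = j then \<bar>x - y\<bar> else x + y)"

definition pdist :: "nat \<Rightarrow> real \<Rightarrow> real \<Rightarrow> nat \<Rightarrow> real \<Rightarrow> real \<Rightarrow> real" where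
  "pdist i t x j s y = sqrt ((t - s)^2 + (jdist i x j y)^2)"

definition jfun :: "nat \<Rightarrow> real \<Rightarrow> (nat \<Rightarrow> real \<times> real \<Rightarrow> real) \<Rightarrow> bool" where
  "jfun N T u \<longleftrightarrow> (\<forall>i\<in>{1..N}. \<forall>j\<in>{1..N}. \<forall>t. 0 < t \<and> t < T \<longrightarrow> u i (t,0) = u j (t,0))"

definition usc_JT :: "nat \<Rightarrow> real \<Rightarrow> (nat \<Rightarrow> real \<times> real \<Rightarrow> real) \<Rightarrow> bool" where
  "usc_JT N T u \<longleftrightarrow> (\<forall>i t x. inJT N T i t x \<longrightarrow> (\<forall>\<epsilon>>0. \<exists>\<delta>>0. \<forall>j s y.
      inJT N T j s y \<and> pdist i t x j s y < \<delta> \<longrightarrow> u j (s,y) < u i (t,x) + \<epsilon>))"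

definition lsc_JT :: "nat \<Rightarrow> real \<Rightarrow> (nat \<Rightarrow> real \<times> real \<Rightarrow> real) \<Rightarrow> bool" where
  "lsc_JT N T u \<longleftrightarrow> (\<forall>i t x. inJT N T i t x \<longrightarrow> (\<forall>\<epsilon>>0. \<exists>\<delta>>0. \<forall>j s y.
      inJT N T j s y \<and> pdist i t x j s y < \<delta> \<longrightarrow> u j (s,y) > u i (t,x) - \<epsilon>))"

text \<open>phi in C^1_*(J_T), with phit i, phix i the (continuous) partial derivatives of phi^i
 on (0,T) x [0,inf) (one-sided at x = 0).\<close>
definition C1star :: "nat \<Rightarrow> real \<Rightarrow> (nat \<Rightarrow> real \<times> real \<Rightarrow> real)
    \<Rightarrow> (nat \<Rightarrow> real \<times> real \<Rightarrow> real) \<Rightarrow> (nat \<Rightarrow> real \<times> real \<Rightarrow> real) \<Rightarrow> bool" where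
  "C1star N T \<phi> \<phi>t \<phi>x \<longleftrightarrow> jfun N T \<phi> \<and>
     (\<forall>i\<in>{1..N}. continuous_on ({0<..<T} \<times> {0..}) (\<phi>t i)
        \<and> continuous_on ({0<..<T} \<times> {0..}) (\<phi>x i)
        \<and> (\<forall>p \<in> {0<..<T} \<times> {0..}.
             (\<phi> i has_derivative (\<lambda>(h,k). \<phi>t i p * h + \<phi>x i p * k))
               (at p within ({0<..<T} \<times> {0..}))))"

definition Hminus :: "(real \<Rightarrow> real) \<Rightarrow> real \<Rightarrow> real" where
  "Hminus Hi p = (INF q\<in>{..0}. Hi (p + q))"

definition A1' :: "nat \<Rightarrow> (nat \<Rightarrow> real \<Rightarrow> real) \<Rightarrow> bool" where
  "A1' N H \<longleftrightarrow> (\<forall>i\<in>{1..N}. continuous_on UNIV (H i)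
      \<and> filterlim (H i) at_top at_infinity
      \<and> (\<exists>p0. (\<forall>p q. p \<le> q \<and> q \<le> p0 \<longrightarrow> H i q \<le> H i p)
              \<and> (\<forall>p q. p0 \<le> p \<and> p \<le> q \<longrightarrow> H i p \<le> H i q)))"

definition H0 :: "nat \<Rightarrow> (nat \<Rightarrow> real \<Rightarrow> real) \<Rightarrow> (nat \<Rightarrow> real) \<Rightarrow> real" where
  "H0 N H p = Max ((\<lambda>i. Hminus (H i) (p i)) ` {1..N})"

definition subsolution :: "nat \<Rightarrow> real \<Rightarrow> (nat \<Rightarrow> real \<Rightarrow> real) \<Rightarrow> (nat \<Rightarrow> real \<times> real \<Rightarrow> real) \<Rightarrow> bool" where
  "subsolution N T H u \<longleftrightarrow> usc_JT N T u \<and>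
    (\<forall>\<phi> \<phi>t \<phi>x i t x r. C1star N T \<phi> \<phi>t \<phi>x \<and> inJT N T i t x \<and> 0 < r
       \<and> (\<forall>j s y. inJT N T j s y \<and> pdist i t x j s y < r \<longrightarrow> u j (s,y) \<le> \<phi> j (s,y))
       \<and> u i (t,x) = \<phi> i (t,x) \<longrightarrow>
         (0 < x \<longrightarrow> \<phi>t i (t,x) + H i (\<phi>x i (t,x)) \<le> 0)
       \<and> (x = 0 \<longrightarrow> \<phi>t i (t,0) + H0 N H (\<lambda>j. \<phi>x j (t,0)) \<le> 0))"

definition supersolution :: "nat \<Rightarrow> real \<Rightarrow> (nat \<Rightarrow> real \<Rightarrow> real) \<Rightarrow> (nat \<Rightarrow> real \<times> real \<Rightarrow> real) \<Rightarrow> bool" where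
  "supersolution N T H u \<longleftrightarrow> lsc_JT N T u \<and>
    (\<forall>\<phi> \<phi>t \<phi>x i t x r. C1star N T \<phi> \<phi>t \<phi>x \<and> inJT N T i t x \<and> 0 < r
       \<and> (\<forall>j s y. inJT N T j s y \<and> pdist i t x j s y < r \<longrightarrow> u j (s,y) \<ge> \<phi> j (s,y))
       \<and> u i (t,x) = \<phi> i (t,x) \<longrightarrow>
         (0 < x \<longrightarrow> \<phi>t i (t,x) + H i (\<phi>x i (t,x)) \<ge> 0)
       \<and> (x = 0 \<longrightarrow> \<phi>t i (t,0) + H0 N H (\<lambda>j. \<phi>x j (t,0)) \<ge> 0))"

end

theory Submission
  imports Defs "HOL-Analysis.Analysis"
begin


definition pd :: "(real\<times>real \<Rightarrow> real) \<Rightarrow> real \<Rightarrow> real \<Rightarrow> real\<times>real \<Rightarrow> (real\<times>real) set \<Rightarrow> bool" where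
  "pd f a b p S \<longleftrightarrow> (f has_derivative (\<lambda>(h,k). a*h + b*k)) (at p within S)"

lemma pd_const: "pd (\<lambda>_. c) 0 0 p S"
  unfolding pd_def by (rule has_derivative_eq_rhs[OF has_derivative_const]) auto

lemma pd_fst: "pd fst 1 0 p S"
  unfolding pd_def by (rule has_derivative_eq_rhs[OF has_derivative_fst[OF has_derivative_ident]]) auto

lemma pd_snd: "pd snd 0 1 p S"
  unfolding pd_def by (rule has_derivative_eq_rhs[OF has_derivative_snd[OF has_derivative_ident]]) auto

lemma pd_add: "pd f a b p S \<Longrightarrow> pd g c d p S \<Longrightarrow> pd (\<lambda>q. f q + g q) (a+c) (b+d) p S"
  unfolding pd_def by (rule has_derivative_eq_rhs[OF has_derivative_add]) (auto simp: algebra_simps)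

lemma pd_diff: "pd f a b p S \<Longrightarrow> pd g c d p S \<Longrightarrow> pd (\<lambda>q. f q - g q) (a-c) (b-d) p S"
  unfolding pd_def by (rule has_derivative_eq_rhs[OF has_derivative_diff]) (auto simp: algebra_simps)

lemma pd_mult: "pd f a b p S \<Longrightarrow> pd g c d p S \<Longrightarrow> pd (\<lambda>q. f q * g q) (f p * c + a * g p) (f p * d + b * g p) p S"
  unfolding pd_def by (rule has_derivative_eq_rhs[OF has_derivative_mult]) (auto simp: algebra_simps)

lemma pd_chain: "(g has_real_derivative e) (at (f p)) \<Longrightarrow> pd f a b p S \<Longrightarrow> pd (\<lambda>q. g (f q)) (e*a) (e*b) p S"
  unfolding pd_def
  apply (rule has_derivative_eq_rhs[OF has_derivative_compose[where g=g]])
    apply assumption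
   apply (simp add: has_field_derivative_def)
  by (auto simp: algebra_simps)

lemma pd_eq: "pd f a b p S \<Longrightarrow> (\<And>q. g q = f q) \<Longrightarrow> a = a' \<Longrightarrow> b = b' \<Longrightarrow> pd g a' b' p S"
  proof -
    assume "pd f a b p S" "\<And>q. g q = f q" "a = a'" "b = b'"
    then show ?thesis by (metis ext)
  qed



lemma int_ge_left:
  fixes h :: "real \<Rightarrow> real"
  assumes "mono h" "h integrable_on {z..z+1}" "\<And>w. w \<in> {z..z+1} \<Longrightarrow> h z \<le> h w"
  shows "h z \<le> integral {z..z+1} h"
proof -
  have "integral {z..z+1} (\<lambda>_. h z) \<le> integral {z..z+1} h"
    by (rule integral_le) (use assms in auto)
  then show ?thesis by (simp add: integral_const_real)
qed

lemma majorant_1d: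
  fixes h :: "real \<Rightarrow> real"
  assumes mh: "mono h"
  shows "\<exists>G G'. (\<forall>z>0. (G has_real_derivative G' z) (at z)) \<and> continuous_on {0<..} G'
          \<and> (\<forall>z\<ge>0. h z \<le> G z)"
proof -
  have hint: "h integrable_on {a..b}" for a b
    by (rule integrable_on_mono_on) (use mh in \<open>auto simp: mono_on_def mono_def\<close>)
  define I where "I w = integral {0..w} h" for w
  define K where "K w = I (w+1) - I w" for w
  have Icont: "continuous_on {0..b} I" for b
    unfolding I_def by (rule indefinite_integral_continuous_1[OF hint])
  have Kcont: "continuous_on {0..b} K" for b
  proof -
    have "continuous_on {0..b} (\<lambda>w. I (w+1))"
      by (rule continuous_on_compose2[OF Icont[of "b+1"]]) (auto intro!: continuous_intros)
    moreover have "continuous_on {0..b} I" by (rule Icont)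
    ultimately show ?thesis unfolding K_def by (intro continuous_intros)
  qed
  have Kint: "K w = integral {w..w+1} h" if "w \<ge> 0" for w
    unfolding K_def I_def using Henstock_Kurzweil_Integration.integral_combine[where a=0 and c=w and b="w+1" and f=h, OF that _ hint] by simp
  have Kge: "h w \<le> K w" if "w \<ge> 0" for w
  proof -
    have "h w \<le> integral {w..w+1} h" by (rule int_ge_left[OF mh hint]) (auto intro: monoD[OF mh])
    then show ?thesis using Kint[OF that] by simp
  qed
  define J where "J z = integral {0..z} K" for z
  define G where "G z = J (z+1) - J z" for z
  define G' where "G' z = K (z+1) - K z" for z
  have Jder: "(J has_real_derivative K z) (at z)" if "z > 0" for z
  proof -
    have "(J has_real_derivative K z) (at z within {0..z+1})"
      unfolding J_def by (rule integral_has_real_derivative[OF Kcont]) (use that in auto)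
    moreover have "z \<in> interior {0..z+1}" using that by simp
    ultimately show ?thesis by (metis at_within_interior)
  qed
  have Gder: "(G has_real_derivative G' z) (at z)" if "z > 0" for z
  proof -
    have z1: "z + 1 > 0" using that by simp
    have "((\<lambda>z. J (z+1)) has_real_derivative K (z+1) * (1+0)) (at z)"
      by (rule DERIV_chain2[OF Jder[OF z1] DERIV_add[OF DERIV_ident DERIV_const]])
    then have "((\<lambda>z. J (z+1) - J z) has_real_derivative K (z+1) * (1+0) - K z) (at z)"
      using Jder[OF that] by (rule DERIV_diff)
    then show ?thesis unfolding G_def G'_def by simp
  qed
  have G'cont: "continuous_on {0<..} G'"
  proof -
    have "isCont K w" if "w > 0" for w
      using continuous_on_interior[OF Kcont[of "w+1"]] that by auto
    then have "isCont G' w" if "w > 0" for w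
    proof -
      have "isCont (\<lambda>x. K (x+1)) w"
        by (rule isCont_o2[where g=K and f="\<lambda>x. x+1"]) (use that \<open>\<And>w. w>0 \<Longrightarrow> isCont K w\<close> in auto)
      then show ?thesis unfolding G'_def using \<open>\<And>w. w>0 \<Longrightarrow> isCont K w\<close>[OF that] by (rule isCont_diff)
    qed
    then show ?thesis by (auto intro!: continuous_at_imp_continuous_on)
  qed
  have Gge: "h z \<le> G z" if "z \<ge> 0" for z
  proof -
    have Kint': "K integrable_on {a..b}" if "a \<ge> 0" for a b
      using integrable_continuous_real[OF continuous_on_subset[OF Kcont[of b]]] that by auto
    have "G z = integral {z..z+1} K"
      unfolding G_def J_def using Henstock_Kurzweil_Integration.integral_combine[where a=0 and c=z and b="z+1" and f=K, OF that _ Kint'] by simp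
    moreover have "integral {z..z+1} h \<le> integral {z..z+1} K"
      by (rule integral_le[OF hint Kint']) (use that Kge in auto)
    moreover have "h z \<le> integral {z..z+1} h"
      by (rule int_ge_left[OF mh hint]) (auto intro: monoD[OF mh])
    ultimately show ?thesis by linarith
  qed
  show ?thesis using Gder G'cont Gge by blast
qed



lemma usc_bdd:
  fixes f :: "'a::metric_space \<Rightarrow> real"
  assumes C: "compact C" and u: "\<forall>p\<in>C. \<exists>\<delta>>0. \<forall>q\<in>C. dist q p < \<delta> \<longrightarrow> f q < f p + 1"
  shows "\<exists>B. \<forall>q\<in>C. f q \<le> B"
proof -
  from u obtain d where d: "\<forall>p\<in>C. d p > 0 \<and> (\<forall>q\<in>C. dist q p < d p \<longrightarrow> f q < f p + 1)"
    by metis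
  have "C \<subseteq> (\<Union>p\<in>C. ball p (d p))" using d by force
  then obtain K where K: "K \<subseteq> C" "finite K" "C \<subseteq> (\<Union>p\<in>K. ball p (d p))"
    using compactE_image[OF C, of C "\<lambda>p. ball p (d p)"] by auto
  define B where "B = Max (insert 0 ((\<lambda>p. f p + 1) ` K))"
  have "f q \<le> B" if q: "q \<in> C" for q
  proof -
    from K(3) q obtain p where p: "p \<in> K" "q \<in> ball p (d p)" by auto
    then have "f q < f p + 1" using d K(1) q by (auto simp: dist_commute)
    moreover have "f p + 1 \<le> B" unfolding B_def using K(2) p(1) by (intro Max_ge) auto
    ultimately show ?thesis by simp
  qed
  then show ?thesis by blast
qed



lemma a_deriv:
  assumes "0 < s" "s < T"
  shows "((\<lambda>s. 1/s + 1/(T-s)) has_real_derivative (- 1/s^2 + 1/(T-s)^2)) (at s)"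
  using assms by (auto intro!: derivative_eq_intros simp: power2_eq_square field_simps)

lemma a_pos: "0 < s \<Longrightarrow> s < (T::real) \<Longrightarrow> 0 < 1/s + 1/(T-s)"
  by (auto intro!: add_pos_pos)

lemma Kset_sub:
  fixes s y z T :: real
  assumes "0 < s" "s < T" "0 \<le> y" "1/s + 1/(T-s) + y \<le> z"
  shows "1/z \<le> s \<and> s \<le> T - 1/z \<and> y \<le> z \<and> 0 < z"
proof -
  have p1: "1/s > 0" "1/(T-s) > 0" using assms by auto
  have z: "0 < z" using p1 assms by linarith
  have "1/s \<le> z" using p1 assms by linarith
  then have "1 \<le> z * s" using assms(1) by (simp add: field_simps)
  then have a: "1/z \<le> s" using z by (simp add: field_simps)
  have "1/(T-s) \<le> z" using p1 assms by linarith
  then have "1 \<le> z * (T-s)" using assms by (simp add: field_simps)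
  then have b: "1/z \<le> T - s" using z by (simp add: field_simps)
  have "y \<le> z" using p1 assms by linarith
  then show ?thesis using a b z by simp
qed

lemma majorant_2d:
  fixes f :: "nat \<Rightarrow> real\<times>real \<Rightarrow> real" and T :: real
  defines "D \<equiv> {0<..<T} \<times> {0..}"
  assumes T: "T > 0"
  and usc: "\<forall>j\<in>{1..N}. \<forall>p\<in>D. \<exists>\<delta>>0. \<forall>q\<in>D. dist q p < \<delta> \<longrightarrow> f j q < f j p + 1"
  shows "\<exists>F Ft Fx. (\<forall>p\<in>D. pd F (Ft p) (Fx p) p D) \<and> continuous_on D Ft \<and> continuous_on D Fx
     \<and> (\<forall>p\<in>D. F p \<ge> 0) \<and> (\<forall>j\<in>{1..N}. \<forall>p\<in>D. f j p \<le> F p)"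
proof -
  define a where "a s = 1/s + 1/(T-s)" for s :: real
  define a' where "a' s = - 1/s^2 + 1/(T-s)^2" for s :: real
  define Ks where "Ks z = {p\<in>D. a (fst p) + snd p \<le> z}" for z
  define S where "S z = insert 0 {f j p |j p. j \<in> {1..N} \<and> p \<in> Ks z}" for z
  define h where "h z = Sup (S z)" for z
  have bdd: "bdd_above (S z)" for z
  proof (cases "z > 0")
    case False
    have "p \<notin> Ks z" for p
    proof
      assume p: "p \<in> Ks z"
      then have "0 < a (fst p)" "0 \<le> snd p" "a (fst p) + snd p \<le> z"
        using a_pos[of "fst p" T] unfolding Ks_def D_def a_def by auto
      with False show False by linarith
    qed
    then have "Ks z = {}" by blast
    then show ?thesis unfolding S_def by simp
  next
    case True
    define R where "R = {1/z..T-1/z} \<times> {0..z}"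
    have RD: "R \<subseteq> D" unfolding R_def D_def using True
      by auto (smt (verit, best) divide_pos_pos)+
    have KR: "Ks z \<subseteq> R" unfolding Ks_def R_def D_def a_def using Kset_sub[of _ T _ z] by force
    have "\<exists>B. \<forall>q\<in>R. f j q \<le> B" if j: "j \<in> {1..N}" for j
    proof (rule usc_bdd)
      show "compact R" unfolding R_def by (intro compact_Times compact_Icc)
      show "\<forall>p\<in>R. \<exists>\<delta>>0. \<forall>q\<in>R. dist q p < \<delta> \<longrightarrow> f j q < f j p + 1"
        using usc j RD by blast
    qed
    then obtain B where B: "\<forall>j\<in>{1..N}. \<forall>q\<in>R. f j q \<le> B j" by metis
    define M where "M = Max (insert 0 (B ` {1..N}))"
    have "x \<le> M" if "x \<in> S z" for x
    proof -
      from that consider "x = 0" | j p where "x = f j p" "j \<in> {1..N}" "p \<in> Ks z"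
        unfolding S_def by blast
      then show ?thesis
      proof cases
        case 1 then show ?thesis unfolding M_def by (intro Max_ge) auto
      next
        case 2
        then have "x \<le> B j" using B KR by blast
        also have "B j \<le> M" unfolding M_def using 2 by (intro Max_ge) auto
        finally show ?thesis .
      qed
    qed
    then show ?thesis by (rule bdd_aboveI)
  qed
  have mh: "mono h"
  proof (rule monoI)
    fix z z' :: real assume "z \<le> z'"
    then have "Ks z \<subseteq> Ks z'" unfolding Ks_def by auto
    then have "S z \<subseteq> S z'" unfolding S_def by blast
    moreover have ne: "S z \<noteq> {}" unfolding S_def by simp
    ultimately show "h z \<le> h z'" unfolding h_def using cSup_subset_mono[OF ne bdd] by blast
  qed
  obtain G G' where G: "\<forall>z>0. (G has_real_derivative G' z) (at z)" "continuous_on {0<..} G'"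
    "\<forall>z\<ge>0. h z \<le> G z" using majorant_1d[OF mh] by blast
  define Z where "Z p = a (fst p) + snd p" for p
  define F where "F p = G (Z p)" for p
  define Ft where "Ft p = G' (Z p) * a' (fst p)" for p
  define Fx where "Fx p = G' (Z p)" for p
  have Zpos: "Z p > 0" if "p \<in> D" for p
    using that a_pos[of "fst p" T] unfolding Z_def D_def a_def by (cases p) auto
  have "pd F (Ft p) (Fx p) p D" if p: "p \<in> D" for p
  proof -
    have s: "0 < fst p" "fst p < T" using p unfolding D_def by auto
    have "pd (\<lambda>q. a (fst q)) (a' (fst p) * 1) (a' (fst p) * 0) p D"
      by (rule pd_chain[OF _ pd_fst]) (use a_deriv[OF s] in \<open>simp add: a_def a'_def\<close>)
    from pd_add[OF this pd_snd] have "pd Z (a' (fst p) * 1 + 0) (a' (fst p) * 0 + 1) p D"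
      unfolding Z_def .
    from pd_chain[OF _ this, of G "G' (Z p)"] G(1) Zpos[OF p]
    have "pd (\<lambda>q. G (Z q)) (G' (Z p) * (a' (fst p) * 1 + 0)) (G' (Z p) * (a' (fst p) * 0 + 1)) p D"
      by blast
    then show ?thesis by (rule pd_eq) (auto simp: F_def Ft_def Fx_def)
  qed
  moreover have cZ: "continuous_on D Z"
    unfolding Z_def a_def D_def
    by (intro continuous_intros) auto
  have cG': "continuous_on D (\<lambda>p. G' (Z p))"
    by (rule continuous_on_compose2[OF G(2) cZ]) (use Zpos in auto)
  have "continuous_on D Ft"
    unfolding Ft_def a'_def D_def using cG' unfolding D_def
    by (intro continuous_intros) auto
  moreover have "continuous_on D Fx" unfolding Fx_def by (rule cG')
  moreover have "h z \<ge> 0" for z unfolding h_def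
    by (rule cSup_upper[OF _ bdd]) (simp add: S_def)
  then have "\<forall>p\<in>D. F p \<ge> 0" unfolding F_def using G(3) Zpos by (meson less_imp_le order_trans)
  moreover have "\<forall>j\<in>{1..N}. \<forall>p\<in>D. f j p \<le> F p"
  proof (intro ballI)
    fix j p assume j: "j \<in> {1..N}" and p: "p \<in> D"
    have "p \<in> Ks (Z p)" unfolding Ks_def Z_def using p by simp
    then have "f j p \<in> S (Z p)" unfolding S_def using j by blast
    then have "f j p \<le> h (Z p)" unfolding h_def by (rule cSup_upper[OF _ bdd])
    also have "\<dots> \<le> F p" unfolding F_def using G(3) Zpos[OF p] by simp
    finally show "f j p \<le> F p" .
  qed
  ultimately show ?thesis by blast
qed



lemma pdist_sq: "(pdist i t x j s y)^2 = (s - t)^2 + (y + (if i = j then -x else x))^2"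
proof -
  have "(pdist i t x j s y)^2 = (t - s)^2 + (jdist i x j y)^2"
    unfolding pdist_def by simp
  moreover have "(jdist i x j y)^2 = (y + (if i = j then -x else x))^2"
    unfolding jdist_def by (cases "i = j") (auto simp: power2_eq_square algebra_simps)
  ultimately show ?thesis by (simp add: power2_eq_square algebra_simps)
qed

lemma C1star_pd: "C1star N T \<phi> \<phi>t \<phi>x \<Longrightarrow> j \<in> {1..N} \<Longrightarrow> p \<in> {0<..<T} \<times> {0..}
   \<Longrightarrow> pd (\<phi> j) (\<phi>t j p) (\<phi>x j p) p ({0<..<T} \<times> {0..})"
  unfolding C1star_def pd_def by blast

lemma pd_cont: "pd f a b p S \<Longrightarrow> continuous (at p within S) f"
  unfolding pd_def by (rule has_derivative_continuous)

lemma localize: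
  fixes v :: "nat \<Rightarrow> real \<times> real \<Rightarrow> real"
  assumes T: "0 < T" and uv: "usc_JT N T v" and phi: "C1star N T \<phi> \<phi>t \<phi>x"
    and r: "0 < r"
    and loc: "\<forall>j s y. inJT N T j s y \<and> pdist i t x j s y < r \<longrightarrow> v j (s,y) \<le> \<phi> j (s,y)"
  shows "\<exists>\<psi> \<psi>t \<psi>x. C1star N T \<psi> \<psi>t \<psi>x \<and> (\<forall>j s y. inJT N T j s y \<longrightarrow> v j (s,y) \<le> \<psi> j (s,y))
     \<and> (\<forall>j s y. pdist i t x j s y = 0 \<longrightarrow>
           \<psi> j (s,y) = \<phi> j (s,y) \<and> \<psi>t j (s,y) = \<phi>t j (s,y) \<and> \<psi>x j (s,y) = \<phi>x j (s,y))"
proof -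
  define D where "D = {0<..<T} \<times> ({0..} :: real set)"
  have inD: "inJT N T j s y \<longleftrightarrow> j \<in> {1..N} \<and> (s,y) \<in> D" for j s y
    unfolding inJT_def D_def by auto
  define f where "f j p = v j p - \<phi> j p" for j p
  have fusc: "\<forall>j\<in>{1..N}. \<forall>p\<in>D. \<exists>\<delta>>0. \<forall>q\<in>D. dist q p < \<delta> \<longrightarrow> f j q < f j p + 1"
  proof (intro ballI)
    fix j p assume j: "j \<in> {1..N}" and p: "p \<in> D"
    obtain t0 x0 where p0: "p = (t0,x0)" by (cases p)
    have "inJT N T j t0 x0" using inD j p p0 by simp
    then have H: "\<forall>\<epsilon>>0. \<exists>\<delta>>0. \<forall>j' s y. inJT N T j' s y \<and> pdist j t0 x0 j' s y < \<delta>
        \<longrightarrow> v j' (s,y) < v j (t0,x0) + \<epsilon>"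
      using uv unfolding usc_JT_def by blast
    have h2: "(1/2::real) > 0" by simp
    from H h2 obtain d1 where d1: "d1 > 0" "\<forall>j' s y. inJT N T j' s y \<and> pdist j t0 x0 j' s y < d1
        \<longrightarrow> v j' (s,y) < v j (t0,x0) + 1/2"
      by blast
    have "continuous (at p within D) (\<phi> j)"
      using pd_cont[OF C1star_pd[OF phi j]] p unfolding D_def by blast
    then obtain d2 where d2: "d2 > 0" "\<forall>q\<in>D. dist q p < d2 \<longrightarrow> dist (\<phi> j q) (\<phi> j p) < 1/2"
      unfolding continuous_within_eps_delta using h2 by blast
    show "\<exists>\<delta>>0. \<forall>q\<in>D. dist q p < \<delta> \<longrightarrow> f j q < f j p + 1"
    proof (intro exI[of _ "min d1 d2"] conjI ballI impI)
      show "0 < min d1 d2" using d1 d2 by simp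
      fix q assume q: "q \<in> D" and dq: "dist q p < min d1 d2"
      obtain s y where q0: "q = (s,y)" by (cases q)
      have "pdist j t0 x0 j s y = dist q p"
        unfolding pdist_def jdist_def q0 p0 dist_Pair_Pair dist_real_def
        by (simp add: power2_eq_square algebra_simps)
      then have "v j q < v j p + 1/2" using d1(2) dq q j inD q0 p0 by auto
      moreover have "dist (\<phi> j q) (\<phi> j p) < 1/2" using d2 q dq by auto
      ultimately show "f j q < f j p + 1" unfolding f_def dist_real_def by linarith
    qed
  qed
  obtain F Ft Fx where F: "\<forall>p\<in>D. pd F (Ft p) (Fx p) p D" "continuous_on D Ft" "continuous_on D Fx"
     "\<forall>p\<in>D. F p \<ge> 0" "\<forall>j\<in>{1..N}. \<forall>p\<in>D. f j p \<le> F p"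
    using majorant_2d[OF T fusc[unfolded D_def]] unfolding D_def by blast
  have Fc: "continuous_on D F"
    using F(1) pd_cont continuous_on_eq_continuous_within by blast
  define e where "e j = (if i = j then -x else x)" for j
  define \<rho> where "\<rho> j q = (fst q - t) * (fst q - t) + (snd q + e j) * (snd q + e j)" for j q
  define \<rho>t where "\<rho>t (j::nat) (q::real\<times>real) = 2 * (fst q - t)" for j q
  define \<rho>x where "\<rho>x j (q::real\<times>real) = 2 * (snd q + e j)" for j q
  define c where "c = 1 / r^4"
  define \<psi> where "\<psi> j q = \<phi> j q + c * (\<rho> j q * \<rho> j q * F q)" for j q
  define \<psi>t where "\<psi>t j q = \<phi>t j q + c * (2 * \<rho> j q * \<rho>t j q * F q + \<rho> j q * \<rho> j q * Ft q)" for j q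
  define \<psi>x where "\<psi>x j q = \<phi>x j q + c * (2 * \<rho> j q * \<rho>x j q * F q + \<rho> j q * \<rho> j q * Fx q)" for j q
  have rho_pd: "pd (\<rho> j) (\<rho>t j p) (\<rho>x j p) p D" for j p
  proof -
    have a: "pd (\<lambda>q. fst q - t) (1 - 0) (0 - 0) p D" by (rule pd_diff[OF pd_fst pd_const])
    have b: "pd (\<lambda>q. snd q + e j) (0 + 0) (1 + 0) p D" by (rule pd_add[OF pd_snd pd_const])
    show ?thesis
      by (rule pd_eq[OF pd_add[OF pd_mult[OF a a] pd_mult[OF b b]]])
         (auto simp: \<rho>_def \<rho>t_def \<rho>x_def)
  qed
  have rho_sq: "\<rho> j (s,y) = (pdist i t x j s y)^2" for j s y
    unfolding pdist_sq \<rho>_def e_def by (simp only: fst_conv snd_conv power2_eq_square)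
  have jf: "jfun N T \<phi>" using phi unfolding C1star_def by blast
  have C1: "C1star N T \<psi> \<psi>t \<psi>x"
    unfolding C1star_def
  proof (rule conjI)
    show "jfun N T \<psi>" unfolding jfun_def
    proof (intro ballI allI impI)
      fix j k s assume jk: "j \<in> {1..N}" "k \<in> {1..N}" "0 < s \<and> s < (T::real)"
      then have "\<phi> j (s,0) = \<phi> k (s,0)" using jf unfolding jfun_def by blast
      moreover have "\<rho> j (s,0) = \<rho> k (s,0)" unfolding \<rho>_def e_def by simp
      ultimately show "\<psi> j (s,0) = \<psi> k (s,0)" unfolding \<psi>_def by simp
    qed
  next
    show "\<forall>j\<in>{1..N}. continuous_on ({0<..<T} \<times> {0..}) (\<psi>t j) \<and>
        continuous_on ({0<..<T} \<times> {0..}) (\<psi>x j) \<and>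
        (\<forall>p\<in>{0<..<T} \<times> {0..}. (\<psi> j has_derivative (\<lambda>(h, k). \<psi>t j p * h + \<psi>x j p * k))
          (at p within {0<..<T} \<times> {0..}))"
      unfolding D_def[symmetric]
    proof (rule ballI)
      fix j assume j: "j \<in> {1..N}"
      have cr: "continuous_on D (\<rho> j)" "continuous_on D (\<rho>t j)" "continuous_on D (\<rho>x j)"
        unfolding \<rho>_def \<rho>t_def \<rho>x_def by (intro continuous_intros)+
      have cp: "continuous_on D (\<phi>t j)" "continuous_on D (\<phi>x j)"
        using phi j unfolding C1star_def D_def by auto
      have A: "continuous_on D (\<psi>t j)"
        unfolding \<psi>t_def using cr cp Fc F(2) by (intro continuous_intros)
      have B: "continuous_on D (\<psi>x j)"
        unfolding \<psi>x_def using cr cp Fc F(3) by (intro continuous_intros)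
      have C: "pd (\<psi> j) (\<psi>t j p) (\<psi>x j p) p D" if pD: "p \<in> D" for p
        by (rule pd_eq[OF pd_add[OF C1star_pd[OF phi j pD[unfolded D_def], folded D_def]
              pd_mult[OF pd_const pd_mult[OF pd_mult[OF rho_pd rho_pd] F(1)[rule_format, OF pD]]]]])
           (auto simp: \<psi>_def \<psi>t_def \<psi>x_def algebra_simps)
      show "continuous_on D (\<psi>t j) \<and> continuous_on D (\<psi>x j) \<and>
        (\<forall>p\<in>D. (\<psi> j has_derivative (\<lambda>(h, k). \<psi>t j p * h + \<psi>x j p * k)) (at p within D))"
        using A B C unfolding pd_def by blast
    qed
  qed
  have dom: "v j (s,y) \<le> \<psi> j (s,y)" if jsy: "inJT N T j s y" for j s y
  proof -
    have j: "j \<in> {1..N}" and sy: "(s,y) \<in> D" using jsy inD by auto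
    have F0: "F (s,y) \<ge> 0" using F(4) sy by auto
    have c0: "c > 0" unfolding c_def using r by simp
    show ?thesis
    proof (cases "pdist i t x j s y < r")
      case True
      then have "v j (s,y) \<le> \<phi> j (s,y)" using loc jsy by blast
      moreover have "0 \<le> c * (\<rho> j (s,y) * \<rho> j (s,y) * F (s,y))"
        using F0 c0 by simp
      ultimately show ?thesis unfolding \<psi>_def by linarith
    next
      case False
      then have h1: "r^2 \<le> \<rho> j (s,y)" unfolding rho_sq using r by (intro power_mono) auto
      have h2: "0 \<le> r^2" by simp
      have h3: "0 \<le> \<rho> j (s,y)" using h1 h2 by linarith
      have "r^2 * r^2 \<le> \<rho> j (s,y) * \<rho> j (s,y)" by (rule mult_mono[OF h1 h1 h3 h2])
      then have "1 \<le> c * (\<rho> j (s,y) * \<rho> j (s,y))" unfolding c_def using r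
        by (simp add: field_simps power2_eq_square power4_eq_xxxx)
      then have "F (s,y) \<le> c * (\<rho> j (s,y) * \<rho> j (s,y)) * F (s,y)"
        using F0 by (metis mult_1 mult_right_mono)
      moreover have "f j (s,y) \<le> F (s,y)" using F(5) j sy by blast
      ultimately show ?thesis unfolding \<psi>_def f_def by (simp add: algebra_simps)
    qed
  qed
  have eq: "\<psi> j (s,y) = \<phi> j (s,y) \<and> \<psi>t j (s,y) = \<phi>t j (s,y) \<and> \<psi>x j (s,y) = \<phi>x j (s,y)"
    if "pdist i t x j s y = 0" for j s y
  proof -
    have "\<rho> j (s,y) = 0" unfolding rho_sq using that by simp
    then show ?thesis unfolding \<psi>_def \<psi>t_def \<psi>x_def by simp
  qed
  show ?thesis using C1 dom eq by blast
qed



lemma phit_deriv: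
  assumes phi: "C1star N T \<phi> \<phi>t \<phi>x" and j: "j \<in> {1..N}" and t: "0 < t" "t < T"
  shows "((\<lambda>s. \<phi> j (s,0)) has_derivative (\<lambda>h. \<phi>t j (t,0) * h)) (at t)"
proof -
  define D where "D = {0<..<T} \<times> ({0..}::real set)"
  have tD: "(t,0) \<in> D" using t unfolding D_def by auto
  have d: "(\<phi> j has_derivative (\<lambda>(h,k). \<phi>t j (t,0) * h + \<phi>x j (t,0) * k)) (at (t,0) within D)"
    using C1star_pd[OF phi j tD[unfolded D_def]] unfolding pd_def D_def .
  have sub: "(\<lambda>s. (s, 0::real)) ` {0<..<T} \<subseteq> D" unfolding D_def by auto
  have g: "((\<lambda>s. (s, 0::real)) has_derivative (\<lambda>h. (h, 0))) (at t within {0<..<T})"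
    by (rule has_derivative_eq_rhs[OF has_derivative_Pair[OF has_derivative_ident has_derivative_const]]) auto
  have "((\<lambda>s. \<phi> j (s,0)) has_derivative (\<lambda>h. (\<lambda>(h,k). \<phi>t j (t,0) * h + \<phi>x j (t,0) * k) (h, 0)))
      (at t within {0<..<T})"
    by (rule has_derivative_in_compose[OF g has_derivative_subset[OF d sub]])
  then have "((\<lambda>s. \<phi> j (s,0)) has_derivative (\<lambda>h. \<phi>t j (t,0) * h)) (at t within {0<..<T})"
    by simp
  moreover have eq: "at t within {0<..<T} = at t" by (rule at_within_open) (use t in auto)
  ultimately show ?thesis by (simp only: eq)
qed

lemma phit_eq:
  assumes phi: "C1star N T \<phi> \<phi>t \<phi>x" and j: "j \<in> {1..N}" and k: "k \<in> {1..N}" and t: "0 < t" "t < T"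
  shows "\<phi>t j (t,0) = \<phi>t k (t,0)"
proof -
  have jf: "jfun N T \<phi>" using phi unfolding C1star_def by blast
  have dk: "((\<lambda>s. \<phi> k (s,0)) has_derivative (\<lambda>h. \<phi>t k (t,0) * h)) (at t)"
    by (rule phit_deriv[OF phi k t])
  have eqs: "\<And>s. s \<in> {0<..<T} \<Longrightarrow> \<phi> k (s,0) = \<phi> j (s,0)"
  proof -
    fix s assume "s \<in> {0<..<(T::real)}"
    then have "0 < s \<and> s < T" by simp
    then show "\<phi> k (s,0) = \<phi> j (s,0)" using jf j k unfolding jfun_def by blast
  qed
  have tin: "t \<in> {0<..<T}" using t by simp
  have "((\<lambda>s. \<phi> j (s,0)) has_derivative (\<lambda>h. \<phi>t k (t,0) * h)) (at t)"
    by (rule has_derivative_transform_within_open[OF dk open_greaterThanLessThan tin eqs])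
  from has_derivative_unique[OF phit_deriv[OF phi j t] this]
  have "(\<lambda>h. \<phi>t j (t,0) * h) 1 = (\<lambda>h. \<phi>t k (t,0) * h) 1" by metis
  then show ?thesis by simp
qed

lemma lsc_neg: assumes "lsc_JT N T u" shows "usc_JT N T (\<lambda>j p. - u j p)"
  unfolding usc_JT_def
proof (intro allI impI)
  fix i t x and \<epsilon> :: real assume P: "inJT N T i t x" and e: "0 < \<epsilon>"
  from assms P e obtain \<delta> where d: "\<delta>>0" "\<forall>j s y. inJT N T j s y \<and> pdist i t x j s y < \<delta>
      \<longrightarrow> u j (s,y) > u i (t,x) - \<epsilon>" unfolding lsc_JT_def by blast
  show "\<exists>\<delta>>0. \<forall>j s y. inJT N T j s y \<and> pdist i t x j s y < \<delta> \<longrightarrow> - u j (s,y) < - u i (t,x) + \<epsilon>"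
    using d by force
qed

lemma C1star_parts:
  assumes "C1star N T \<phi> \<phi>t \<phi>x"
  shows "jfun N T \<phi>" "\<And>j. j \<in> {1..N} \<Longrightarrow> continuous_on ({0<..<T} \<times> {0..}) (\<phi>t j)"
    "\<And>j. j \<in> {1..N} \<Longrightarrow> continuous_on ({0<..<T} \<times> {0..}) (\<phi>x j)"
  using assms unfolding C1star_def by blast+

lemma C1star_intro:
  assumes "jfun N T \<phi>" "\<And>j. j \<in> {1..N} \<Longrightarrow> continuous_on ({0<..<T} \<times> {0..}) (\<phi>t j)"
    "\<And>j. j \<in> {1..N} \<Longrightarrow> continuous_on ({0<..<T} \<times> {0..}) (\<phi>x j)"
    "\<And>j p. j \<in> {1..N} \<Longrightarrow> p \<in> {0<..<T} \<times> {0..} \<Longrightarrow> pd (\<phi> j) (\<phi>t j p) (\<phi>x j p) p ({0<..<T} \<times> {0..})"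
  shows "C1star N T \<phi> \<phi>t \<phi>x"
  using assms unfolding C1star_def pd_def by blast

lemma C1star_neg:
  assumes A: "C1star N T \<phi> \<phi>t \<phi>x"
  shows "C1star N T (\<lambda>j p. - \<phi> j p) (\<lambda>j p. - \<phi>t j p) (\<lambda>j p. - \<phi>x j p)"
proof (rule C1star_intro)
  have jf: "jfun N T \<phi>" by (rule C1star_parts(1)[OF A])
  show "jfun N T (\<lambda>j p. - \<phi> j p)" unfolding jfun_def
  proof (intro ballI allI impI)
    fix i k and t :: real assume "i \<in> {1..N}" "k \<in> {1..N}" "0 < t \<and> t < T"
    then have "\<phi> i (t,0) = \<phi> k (t,0)" using jf unfolding jfun_def by blast
    then show "(\<lambda>j p. - \<phi> j p) i (t,0) = (\<lambda>j p. - \<phi> j p) k (t,0)" by simp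
  qed
  fix j assume j: "j \<in> {1..N}"
  show "continuous_on ({0<..<T} \<times> {0..}) (\<lambda>p. - \<phi>t j p)"
    by (rule continuous_on_minus[OF C1star_parts(2)[OF A j]])
  show "continuous_on ({0<..<T} \<times> {0..}) (\<lambda>p. - \<phi>x j p)"
    by (rule continuous_on_minus[OF C1star_parts(3)[OF A j]])
  fix p assume p: "p \<in> {0<..<T} \<times> ({0..}::real set)"
  show "pd (\<lambda>p. - \<phi> j p) (- \<phi>t j p) (- \<phi>x j p) p ({0<..<T} \<times> {0..})"
    by (rule pd_eq[OF pd_diff[OF pd_const C1star_pd[OF A j p]]]) auto
qed

lemma C1star_lin:
  assumes A: "C1star N T \<phi> \<phi>t \<phi>x"
  shows "C1star N T (\<lambda>j p. \<phi> j p + q j * snd p) \<phi>t (\<lambda>j p. \<phi>x j p + q j)"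
proof (rule C1star_intro)
  have jf: "jfun N T \<phi>" by (rule C1star_parts(1)[OF A])
  show "jfun N T (\<lambda>j p. \<phi> j p + q j * snd p)" unfolding jfun_def
  proof (intro ballI allI impI)
    fix i k and t :: real assume "i \<in> {1..N}" "k \<in> {1..N}" "0 < t \<and> t < T"
    then have "\<phi> i (t,0) = \<phi> k (t,0)" using jf unfolding jfun_def by blast
    then show "(\<lambda>j p. \<phi> j p + q j * snd p) i (t,0) = (\<lambda>j p. \<phi> j p + q j * snd p) k (t,0)" by simp
  qed
  fix j assume j: "j \<in> {1..N}"
  show "continuous_on ({0<..<T} \<times> {0..}) (\<phi>t j)"
    by (rule C1star_parts(2)[OF A j])
  show "continuous_on ({0<..<T} \<times> {0..}) (\<lambda>p. \<phi>x j p + q j)"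
    by (rule continuous_on_add[OF C1star_parts(3)[OF A j] continuous_on_const])
  fix p assume p: "p \<in> {0<..<T} \<times> ({0..}::real set)"
  show "pd (\<lambda>p. \<phi> j p + q j * snd p) (\<phi>t j p) (\<phi>x j p + q j) p ({0<..<T} \<times> {0..})"
    by (rule pd_eq[OF pd_add[OF C1star_pd[OF A j p] pd_mult[OF pd_const pd_snd]]]) auto
qed

lemma hminus_eq:
  fixes Hi :: "real \<Rightarrow> real"
  assumes m1: "\<forall>p q. p \<le> q \<and> q \<le> p0 \<longrightarrow> Hi q \<le> Hi p"
    and m2: "\<forall>p q. p0 \<le> p \<and> p \<le> q \<longrightarrow> Hi p \<le> Hi q"
  shows "Hminus Hi w = Hi (min w p0)"
  unfolding Hminus_def
proof (rule cInf_eq_minimum)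
  show "Hi (min w p0) \<in> (\<lambda>q. Hi (w + q)) ` {..0}"
    by (rule image_eqI[of _ _ "min w p0 - w"]) auto
  fix y assume "y \<in> (\<lambda>q. Hi (w + q)) ` {..0}"
  then obtain q where q: "q \<le> 0" "y = Hi (w + q)" by auto
  show "Hi (min w p0) \<le> y"
  proof (cases "w + q \<le> p0")
    case True
    show ?thesis
    proof (cases "w \<le> p0")
      case True
      then show ?thesis using m1[rule_format, of "w+q" w] q by auto
    next
      case False
      then show ?thesis using m1[rule_format, of "w+q" p0] q \<open>w + q \<le> p0\<close> by auto
    qed
  next
    case False
    then show ?thesis using m2[rule_format, of p0 "w+q"] q by auto
  qed
qed



lemma H0_ge: "j \<in> {1..N} \<Longrightarrow> Hminus (H j) (p j) \<le> H0 N H p"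
  unfolding H0_def by (rule Max_ge) auto

lemma H0_attained: "1 \<le> N \<Longrightarrow> \<exists>k\<in>{1..N}. H0 N H p = Hminus (H k) (p k)"
proof -
  assume N: "1 \<le> N"
  have "H0 N H p \<in> (\<lambda>i. Hminus (H i) (p i)) ` {1..N}"
    unfolding H0_def by (rule Max_in) (use N in auto)
  then show ?thesis by auto
qed

lemma coercive_big:
  fixes f :: "real \<Rightarrow> real"
  assumes "filterlim f at_top at_infinity"
  shows "\<exists>W\<ge>B. M \<le> f W"
proof -
  have "eventually (\<lambda>x. M \<le> f x) at_infinity" using assms filterlim_at_top by blast
  then obtain b where b: "\<forall>x. b \<le> norm x \<longrightarrow> M \<le> f x" unfolding eventually_at_infinity by blast
  define W where "W = max B \<bar>b\<bar>"
  have "b \<le> norm W" unfolding W_def by auto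
  then show ?thesis using b unfolding W_def by (intro exI[of _ "max B \<bar>b\<bar>"]) auto
qed

lemma A1'_P0:
  assumes "A1' N H"
  obtains P0 where "\<forall>j\<in>{1..N}. (\<forall>a b. a \<le> b \<and> b \<le> P0 j \<longrightarrow> H j b \<le> H j a)
      \<and> (\<forall>a b. P0 j \<le> a \<and> a \<le> b \<longrightarrow> H j a \<le> H j b)"
proof -
  have "\<forall>j\<in>{1..N}. \<exists>p0. (\<forall>a b. a \<le> b \<and> b \<le> p0 \<longrightarrow> H j b \<le> H j a)
      \<and> (\<forall>a b. p0 \<le> a \<and> a \<le> b \<longrightarrow> H j a \<le> H j b)"
    using assms unfolding A1'_def by blast
  from bchoice[OF this] show ?thesis using that by blast
qed

lemma slope_sub:
  fixes u \<psi> \<psi>t \<psi>x :: "nat \<Rightarrow> real \<times> real \<Rightarrow> real" and H :: "nat \<Rightarrow> real \<Rightarrow> real"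
  assumes N: "1 \<le> N" and A: "A1' N H"
  and cond: "\<forall>\<phi> \<phi>t \<phi>x i t x. C1star N T \<phi> \<phi>t \<phi>x \<and> inJT N T i t x
                \<and> (\<forall>j s y. inJT N T j s y \<longrightarrow> u j (s,y) \<le> \<phi> j (s,y))
                \<and> u i (t,x) = \<phi> i (t,x) \<longrightarrow>
                  (0 < x \<longrightarrow> \<phi>t i (t,x) + H i (\<phi>x i (t,x)) \<le> 0)
                \<and> (x = 0 \<longrightarrow> (\<exists>j\<in>{1..N}. \<phi>t j (t,0) + H j (\<phi>x j (t,0)) \<le> 0)
                       \<or> \<phi>t i (t,0) + H0 N H (\<lambda>j. \<phi>x j (t,0)) \<le> 0)"
  and psi: "C1star N T \<psi> \<psi>t \<psi>x" and glob: "\<forall>j s y. inJT N T j s y \<longrightarrow> u j (s,y) \<le> \<psi> j (s,y)"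
  and P: "inJT N T i t 0" and touch: "u i (t,0) = \<psi> i (t,0)"
  shows "\<psi>t i (t,0) + H0 N H (\<lambda>j. \<psi>x j (t,0)) \<le> 0"
proof -
  define p where "p j = \<psi>x j (t,0)" for j
  obtain P0 where P0: "\<forall>j\<in>{1..N}. (\<forall>a b. a \<le> b \<and> b \<le> P0 j \<longrightarrow> H j b \<le> H j a)
      \<and> (\<forall>a b. P0 j \<le> a \<and> a \<le> b \<longrightarrow> H j a \<le> H j b)" using A1'_P0[OF A] by blast
  have co: "\<forall>j\<in>{1..N}. filterlim (H j) at_top at_infinity" using A unfolding A1'_def by blast
  define M where "M = H0 N H p"
  have hm: "Hminus (H j) w = H j (min w (P0 j))" if "j \<in> {1..N}" for j w
    using hminus_eq P0 that by blast
  have "\<forall>j\<in>{1..N}. \<exists>W\<ge>max (p j) (P0 j). M \<le> H j W" using coercive_big co by blast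
  from bchoice[OF this] obtain Wf where Wf: "\<forall>j\<in>{1..N}. max (p j) (P0 j) \<le> Wf j \<and> M \<le> H j (Wf j)"
    by blast
  define w where "w j = (if p j < P0 j \<and> M \<le> H j (p j) then p j else Wf j)" for j
  define q where "q j = w j - p j" for j
  have q0: "q j \<ge> 0" if "j \<in> {1..N}" for j using Wf that unfolding q_def w_def by auto
  have Hw: "M \<le> H j (w j)" if "j \<in> {1..N}" for j using Wf that unfolding w_def by auto
  have tT: "0 < t" "t < T" and i: "i \<in> {1..N}" using P unfolding inJT_def by auto
  have C1: "C1star N T (\<lambda>j pp. \<psi> j pp + q j * snd pp) \<psi>t (\<lambda>j pp. \<psi>x j pp + q j)"
    by (rule C1star_lin[OF psi])
  have gl: "\<forall>j s y. inJT N T j s y \<longrightarrow> u j (s,y) \<le> (\<lambda>j pp. \<psi> j pp + q j * snd pp) j (s,y)"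
  proof (intro allI impI)
    fix j s y assume jsy: "inJT N T j s y"
    then have "j \<in> {1..N}" "0 \<le> y" unfolding inJT_def by auto
    then have "0 \<le> q j * y" using q0 by simp
    then show "u j (s,y) \<le> (\<lambda>j pp. \<psi> j pp + q j * snd pp) j (s,y)" using glob jsy by force
  qed
  have tc: "u i (t,0) = (\<lambda>j pp. \<psi> j pp + q j * snd pp) i (t,0)" using touch by simp
  have "(\<exists>j\<in>{1..N}. \<psi>t j (t,0) + H j ((\<lambda>j pp. \<psi>x j pp + q j) j (t,0)) \<le> 0)
      \<or> \<psi>t i (t,0) + H0 N H (\<lambda>j. (\<lambda>j pp. \<psi>x j pp + q j) j (t,0)) \<le> 0"
    using cond C1 P gl tc by blast
  moreover have wx: "(\<lambda>j. (\<lambda>j pp. \<psi>x j pp + q j) j (t,0)) = w" unfolding q_def p_def by auto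
  ultimately have disj: "(\<exists>j\<in>{1..N}. \<psi>t j (t,0) + H j (w j) \<le> 0) \<or> \<psi>t i (t,0) + H0 N H w \<le> 0"
    by (metis (no_types, lifting))
  show ?thesis
    using disj
  proof
    assume "\<exists>j\<in>{1..N}. \<psi>t j (t,0) + H j (w j) \<le> 0"
    then obtain j where j: "j \<in> {1..N}" "\<psi>t j (t,0) + H j (w j) \<le> 0" by blast
    have "\<psi>t j (t,0) = \<psi>t i (t,0)" by (rule phit_eq[OF psi j(1) i tT])
    then show ?thesis using j Hw[OF j(1)] unfolding M_def p_def by simp
  next
    assume h: "\<psi>t i (t,0) + H0 N H w \<le> 0"
    obtain k where k: "k \<in> {1..N}" "M = Hminus (H k) (p k)"
      using H0_attained[OF N] unfolding M_def by blast
    have "Hminus (H k) (w k) = M"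
    proof (cases "p k < P0 k")
      case True
      then have "M = H k (p k)" using k hm by simp
      then have "w k = p k" using True unfolding w_def by simp
      then show ?thesis using k by simp
    next
      case False
      then have "w k = Wf k" unfolding w_def by simp
      then have "P0 k \<le> w k" using Wf k by auto
      then show ?thesis using k hm False by simp
    qed
    then have "M \<le> H0 N H w" using H0_ge[OF k(1), of H w] by simp
    then show ?thesis using h unfolding M_def p_def by simp
  qed
qed

lemma slope_super:
  fixes u \<psi> \<psi>t \<psi>x :: "nat \<Rightarrow> real \<times> real \<Rightarrow> real" and H :: "nat \<Rightarrow> real \<Rightarrow> real"
  assumes N: "1 \<le> N" and A: "A1' N H"
  and cond: "\<forall>\<phi> \<phi>t \<phi>x i t x. C1star N T \<phi> \<phi>t \<phi>x \<and> inJT N T i t x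
                \<and> (\<forall>j s y. inJT N T j s y \<longrightarrow> u j (s,y) \<ge> \<phi> j (s,y))
                \<and> u i (t,x) = \<phi> i (t,x) \<longrightarrow>
                  (0 < x \<longrightarrow> \<phi>t i (t,x) + H i (\<phi>x i (t,x)) \<ge> 0)
                \<and> (x = 0 \<longrightarrow> (\<exists>j\<in>{1..N}. \<phi>t j (t,0) + H j (\<phi>x j (t,0)) \<ge> 0)
                       \<or> \<phi>t i (t,0) + H0 N H (\<lambda>j. \<phi>x j (t,0)) \<ge> 0)"
  and psi: "C1star N T \<psi> \<psi>t \<psi>x" and glob: "\<forall>j s y. inJT N T j s y \<longrightarrow> u j (s,y) \<ge> \<psi> j (s,y)"
  and P: "inJT N T i t 0" and touch: "u i (t,0) = \<psi> i (t,0)"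
  shows "\<psi>t i (t,0) + H0 N H (\<lambda>j. \<psi>x j (t,0)) \<ge> 0"
proof -
  define p where "p j = \<psi>x j (t,0)" for j
  obtain P0 where P0: "\<forall>j\<in>{1..N}. (\<forall>a b. a \<le> b \<and> b \<le> P0 j \<longrightarrow> H j b \<le> H j a)
      \<and> (\<forall>a b. P0 j \<le> a \<and> a \<le> b \<longrightarrow> H j a \<le> H j b)" using A1'_P0[OF A] by blast
  have hm: "Hminus (H j) w = H j (min w (P0 j))" if "j \<in> {1..N}" for j w
    using hminus_eq P0 that by blast
  define w where "w j = min (p j) (P0 j)" for j
  define q where "q j = w j - p j" for j
  have q0: "q j \<le> 0" for j unfolding q_def w_def by auto
  have tT: "0 < t" "t < T" and i: "i \<in> {1..N}" using P unfolding inJT_def by auto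
  have C1: "C1star N T (\<lambda>j pp. \<psi> j pp + q j * snd pp) \<psi>t (\<lambda>j pp. \<psi>x j pp + q j)"
    by (rule C1star_lin[OF psi])
  have gl: "\<forall>j s y. inJT N T j s y \<longrightarrow> u j (s,y) \<ge> (\<lambda>j pp. \<psi> j pp + q j * snd pp) j (s,y)"
  proof (intro allI impI)
    fix j s y assume jsy: "inJT N T j s y"
    then have "0 \<le> y" unfolding inJT_def by auto
    then have "q j * y \<le> 0" using q0[of j] by (simp add: mult_nonpos_nonneg)
    then show "u j (s,y) \<ge> (\<lambda>j pp. \<psi> j pp + q j * snd pp) j (s,y)" using glob jsy by force
  qed
  have tc: "u i (t,0) = (\<lambda>j pp. \<psi> j pp + q j * snd pp) i (t,0)" using touch by simp
  have "(\<exists>j\<in>{1..N}. \<psi>t j (t,0) + H j ((\<lambda>j pp. \<psi>x j pp + q j) j (t,0)) \<ge> 0)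
      \<or> \<psi>t i (t,0) + H0 N H (\<lambda>j. (\<lambda>j pp. \<psi>x j pp + q j) j (t,0)) \<ge> 0"
    using cond C1 P gl tc by blast
  moreover have wx: "(\<lambda>j. (\<lambda>j pp. \<psi>x j pp + q j) j (t,0)) = w" unfolding q_def p_def by auto
  ultimately have disj: "(\<exists>j\<in>{1..N}. \<psi>t j (t,0) + H j (w j) \<ge> 0) \<or> \<psi>t i (t,0) + H0 N H w \<ge> 0"
    by (metis (no_types, lifting))
  show ?thesis
    using disj
  proof
    assume "\<exists>j\<in>{1..N}. \<psi>t j (t,0) + H j (w j) \<ge> 0"
    then obtain j where j: "j \<in> {1..N}" "\<psi>t j (t,0) + H j (w j) \<ge> 0" by blast
    have "\<psi>t j (t,0) = \<psi>t i (t,0)" by (rule phit_eq[OF psi j(1) i tT])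
    moreover have "H j (w j) = Hminus (H j) (p j)" using hm[OF j(1)] unfolding w_def by simp
    moreover have "Hminus (H j) (p j) \<le> H0 N H p" by (rule H0_ge[OF j(1)])
    ultimately show ?thesis using j unfolding p_def by simp
  next
    assume h: "\<psi>t i (t,0) + H0 N H w \<ge> 0"
    have "H0 N H w = H0 N H p" unfolding H0_def
    proof (rule arg_cong[where f=Max], rule image_cong[OF refl])
      fix j assume j: "j \<in> {1..N}"
      show "Hminus (H j) (w j) = Hminus (H j) (p j)" using hm[OF j] unfolding w_def by simp
    qed
    then show ?thesis using h unfolding p_def by simp
  qed
qed



theorem mainTheorem5:
  fixes N :: nat and T :: real and H :: "nat \<Rightarrow> real \<Rightarrow> real"
    and u :: "nat \<Rightarrow> real \<times> real \<Rightarrow> real"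
  assumes "1 \<le> N" and "0 < T" and "A1' N H" and "jfun N T u"
  shows "(usc_JT N T u \<longrightarrow>
           (subsolution N T H u \<longleftrightarrow>
             (\<forall>\<phi> \<phi>t \<phi>x i t x. C1star N T \<phi> \<phi>t \<phi>x \<and> inJT N T i t x
                \<and> (\<forall>j s y. inJT N T j s y \<longrightarrow> u j (s,y) \<le> \<phi> j (s,y))
                \<and> u i (t,x) = \<phi> i (t,x) \<longrightarrow>
                  (0 < x \<longrightarrow> \<phi>t i (t,x) + H i (\<phi>x i (t,x)) \<le> 0)
                \<and> (x = 0 \<longrightarrow> (\<exists>j\<in>{1..N}. \<phi>t j (t,0) + H j (\<phi>x j (t,0)) \<le> 0)
                       \<or> \<phi>t i (t,0) + H0 N H (\<lambda>j. \<phi>x j (t,0)) \<le> 0))))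
       \<and> (lsc_JT N T u \<longrightarrow>
           (supersolution N T H u \<longleftrightarrow>
             (\<forall>\<phi> \<phi>t \<phi>x i t x. C1star N T \<phi> \<phi>t \<phi>x \<and> inJT N T i t x
                \<and> (\<forall>j s y. inJT N T j s y \<longrightarrow> u j (s,y) \<ge> \<phi> j (s,y))
                \<and> u i (t,x) = \<phi> i (t,x) \<longrightarrow>
                  (0 < x \<longrightarrow> \<phi>t i (t,x) + H i (\<phi>x i (t,x)) \<ge> 0)
                \<and> (x = 0 \<longrightarrow> (\<exists>j\<in>{1..N}. \<phi>t j (t,0) + H j (\<phi>x j (t,0)) \<ge> 0)
                       \<or> \<phi>t i (t,0) + H0 N H (\<lambda>j. \<phi>x j (t,0)) \<ge> 0))))"
proof -
  have N: "1 \<le> N" and T: "0 < T" and A: "A1' N H" using assms by auto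
  have pd0: "pdist i t x i t x = 0" for i t x unfolding pdist_def jdist_def by simp
  have pd00: "pdist i t 0 j t 0 = 0" for i j t unfolding pdist_def jdist_def by simp
  show ?thesis
  proof (intro conjI impI iffI)
    assume us: "usc_JT N T u" and S: "subsolution N T H u"
    show "\<forall>\<phi> \<phi>t \<phi>x i t x. C1star N T \<phi> \<phi>t \<phi>x \<and> inJT N T i t x
                \<and> (\<forall>j s y. inJT N T j s y \<longrightarrow> u j (s,y) \<le> \<phi> j (s,y))
                \<and> u i (t,x) = \<phi> i (t,x) \<longrightarrow>
                  (0 < x \<longrightarrow> \<phi>t i (t,x) + H i (\<phi>x i (t,x)) \<le> 0)
                \<and> (x = 0 \<longrightarrow> (\<exists>j\<in>{1..N}. \<phi>t j (t,0) + H j (\<phi>x j (t,0)) \<le> 0)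
                       \<or> \<phi>t i (t,0) + H0 N H (\<lambda>j. \<phi>x j (t,0)) \<le> 0)"
    proof (intro allI impI)
      fix \<phi> \<phi>t \<phi>x i t x
      assume h: "C1star N T \<phi> \<phi>t \<phi>x \<and> inJT N T i t x
                \<and> (\<forall>j s y. inJT N T j s y \<longrightarrow> u j (s,y) \<le> \<phi> j (s,y)) \<and> u i (t,x) = \<phi> i (t,x)"
      have loc: "\<forall>j s y. inJT N T j s y \<and> pdist i t x j s y < 1 \<longrightarrow> u j (s,y) \<le> \<phi> j (s,y)"
        using h by blast
      have S': "C1star N T \<phi> \<phi>t \<phi>x \<and> inJT N T i t x \<and> 0 < (1::real)
       \<and> (\<forall>j s y. inJT N T j s y \<and> pdist i t x j s y < 1 \<longrightarrow> u j (s,y) \<le> \<phi> j (s,y))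
       \<and> u i (t,x) = \<phi> i (t,x) \<longrightarrow>
         (0 < x \<longrightarrow> \<phi>t i (t,x) + H i (\<phi>x i (t,x)) \<le> 0)
       \<and> (x = 0 \<longrightarrow> \<phi>t i (t,0) + H0 N H (\<lambda>j. \<phi>x j (t,0)) \<le> 0)"
        using S unfolding subsolution_def by blast
      then have "(0 < x \<longrightarrow> \<phi>t i (t,x) + H i (\<phi>x i (t,x)) \<le> 0)
       \<and> (x = 0 \<longrightarrow> \<phi>t i (t,0) + H0 N H (\<lambda>j. \<phi>x j (t,0)) \<le> 0)" using h loc by simp
      then show "(0 < x \<longrightarrow> \<phi>t i (t,x) + H i (\<phi>x i (t,x)) \<le> 0)
                \<and> (x = 0 \<longrightarrow> (\<exists>j\<in>{1..N}. \<phi>t j (t,0) + H j (\<phi>x j (t,0)) \<le> 0)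
                       \<or> \<phi>t i (t,0) + H0 N H (\<lambda>j. \<phi>x j (t,0)) \<le> 0)" by blast
    qed
  next
    assume us: "usc_JT N T u" and C: "\<forall>\<phi> \<phi>t \<phi>x i t x. C1star N T \<phi> \<phi>t \<phi>x \<and> inJT N T i t x
                \<and> (\<forall>j s y. inJT N T j s y \<longrightarrow> u j (s,y) \<le> \<phi> j (s,y))
                \<and> u i (t,x) = \<phi> i (t,x) \<longrightarrow>
                  (0 < x \<longrightarrow> \<phi>t i (t,x) + H i (\<phi>x i (t,x)) \<le> 0)
                \<and> (x = 0 \<longrightarrow> (\<exists>j\<in>{1..N}. \<phi>t j (t,0) + H j (\<phi>x j (t,0)) \<le> 0)
                       \<or> \<phi>t i (t,0) + H0 N H (\<lambda>j. \<phi>x j (t,0)) \<le> 0)"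
    show "subsolution N T H u" unfolding subsolution_def
    proof (intro conjI allI impI)
      show "usc_JT N T u" by (rule us)
      fix \<phi> \<phi>t \<phi>x i t x r
      assume h: "C1star N T \<phi> \<phi>t \<phi>x \<and> inJT N T i t x \<and> 0 < r
       \<and> (\<forall>j s y. inJT N T j s y \<and> pdist i t x j s y < r \<longrightarrow> u j (s,y) \<le> \<phi> j (s,y))
       \<and> u i (t,x) = \<phi> i (t,x)"
      then have phi: "C1star N T \<phi> \<phi>t \<phi>x" and P: "inJT N T i t x" and r: "0 < r"
        and loc: "\<forall>j s y. inJT N T j s y \<and> pdist i t x j s y < r \<longrightarrow> u j (s,y) \<le> \<phi> j (s,y)"
        and tc: "u i (t,x) = \<phi> i (t,x)" by blast+
      obtain \<psi> \<psi>t \<psi>x where psi: "C1star N T \<psi> \<psi>t \<psi>x"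
        and gl: "\<forall>j s y. inJT N T j s y \<longrightarrow> u j (s,y) \<le> \<psi> j (s,y)"
        and eq: "\<forall>j s y. pdist i t x j s y = 0 \<longrightarrow>
           \<psi> j (s,y) = \<phi> j (s,y) \<and> \<psi>t j (s,y) = \<phi>t j (s,y) \<and> \<psi>x j (s,y) = \<phi>x j (s,y)"
        using localize[OF T us phi r loc] by blast
      have eqP: "\<psi> i (t,x) = \<phi> i (t,x)" "\<psi>t i (t,x) = \<phi>t i (t,x)" "\<psi>x i (t,x) = \<phi>x i (t,x)"
        using eq pd0[of i t x] by auto
      have tc': "u i (t,x) = \<psi> i (t,x)" using tc eqP by simp
      have R: "(0 < x \<longrightarrow> \<psi>t i (t,x) + H i (\<psi>x i (t,x)) \<le> 0)"
        using C psi P gl tc' by blast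
      show "\<phi>t i (t,x) + H i (\<phi>x i (t,x)) \<le> 0" if "0 < x" using R eqP that by simp
      show "\<phi>t i (t,0) + H0 N H (\<lambda>j. \<phi>x j (t,0)) \<le> 0" if x0: "x = 0"
      proof -
        have "\<psi>t i (t,0) + H0 N H (\<lambda>j. \<psi>x j (t,0)) \<le> 0"
          by (rule slope_sub[OF N A C psi gl]) (use P tc' x0 in auto)
        moreover have "(\<lambda>j. \<psi>x j (t,0)) = (\<lambda>j. \<phi>x j (t,0))"
          using eq pd00[of i t] x0 by auto
        ultimately show "\<phi>t i (t,0) + H0 N H (\<lambda>j. \<phi>x j (t,0)) \<le> 0" using eqP x0 by simp
      qed
    qed
  next
    assume us: "lsc_JT N T u" and S: "supersolution N T H u"
    show "\<forall>\<phi> \<phi>t \<phi>x i t x. C1star N T \<phi> \<phi>t \<phi>x \<and> inJT N T i t x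
                \<and> (\<forall>j s y. inJT N T j s y \<longrightarrow> u j (s,y) \<ge> \<phi> j (s,y))
                \<and> u i (t,x) = \<phi> i (t,x) \<longrightarrow>
                  (0 < x \<longrightarrow> \<phi>t i (t,x) + H i (\<phi>x i (t,x)) \<ge> 0)
                \<and> (x = 0 \<longrightarrow> (\<exists>j\<in>{1..N}. \<phi>t j (t,0) + H j (\<phi>x j (t,0)) \<ge> 0)
                       \<or> \<phi>t i (t,0) + H0 N H (\<lambda>j. \<phi>x j (t,0)) \<ge> 0)"
    proof (intro allI impI)
      fix \<phi> \<phi>t \<phi>x i t x
      assume h: "C1star N T \<phi> \<phi>t \<phi>x \<and> inJT N T i t x
                \<and> (\<forall>j s y. inJT N T j s y \<longrightarrow> u j (s,y) \<ge> \<phi> j (s,y)) \<and> u i (t,x) = \<phi> i (t,x)"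
      have loc: "\<forall>j s y. inJT N T j s y \<and> pdist i t x j s y < 1 \<longrightarrow> u j (s,y) \<ge> \<phi> j (s,y)"
        using h by blast
      have S': "C1star N T \<phi> \<phi>t \<phi>x \<and> inJT N T i t x \<and> 0 < (1::real)
       \<and> (\<forall>j s y. inJT N T j s y \<and> pdist i t x j s y < 1 \<longrightarrow> u j (s,y) \<ge> \<phi> j (s,y))
       \<and> u i (t,x) = \<phi> i (t,x) \<longrightarrow>
         (0 < x \<longrightarrow> \<phi>t i (t,x) + H i (\<phi>x i (t,x)) \<ge> 0)
       \<and> (x = 0 \<longrightarrow> \<phi>t i (t,0) + H0 N H (\<lambda>j. \<phi>x j (t,0)) \<ge> 0)"
        using S unfolding supersolution_def by blast
      then have "(0 < x \<longrightarrow> \<phi>t i (t,x) + H i (\<phi>x i (t,x)) \<ge> 0)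
       \<and> (x = 0 \<longrightarrow> \<phi>t i (t,0) + H0 N H (\<lambda>j. \<phi>x j (t,0)) \<ge> 0)" using h loc by simp
      then show "(0 < x \<longrightarrow> \<phi>t i (t,x) + H i (\<phi>x i (t,x)) \<ge> 0)
                \<and> (x = 0 \<longrightarrow> (\<exists>j\<in>{1..N}. \<phi>t j (t,0) + H j (\<phi>x j (t,0)) \<ge> 0)
                       \<or> \<phi>t i (t,0) + H0 N H (\<lambda>j. \<phi>x j (t,0)) \<ge> 0)" by blast
    qed
  next
    assume us: "lsc_JT N T u" and C: "\<forall>\<phi> \<phi>t \<phi>x i t x. C1star N T \<phi> \<phi>t \<phi>x \<and> inJT N T i t x
                \<and> (\<forall>j s y. inJT N T j s y \<longrightarrow> u j (s,y) \<ge> \<phi> j (s,y))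
                \<and> u i (t,x) = \<phi> i (t,x) \<longrightarrow>
                  (0 < x \<longrightarrow> \<phi>t i (t,x) + H i (\<phi>x i (t,x)) \<ge> 0)
                \<and> (x = 0 \<longrightarrow> (\<exists>j\<in>{1..N}. \<phi>t j (t,0) + H j (\<phi>x j (t,0)) \<ge> 0)
                       \<or> \<phi>t i (t,0) + H0 N H (\<lambda>j. \<phi>x j (t,0)) \<ge> 0)"
    show "supersolution N T H u" unfolding supersolution_def
    proof (intro conjI allI impI)
      show "lsc_JT N T u" by (rule us)
      fix \<phi> \<phi>t \<phi>x i t x r
      assume h: "C1star N T \<phi> \<phi>t \<phi>x \<and> inJT N T i t x \<and> 0 < r
       \<and> (\<forall>j s y. inJT N T j s y \<and> pdist i t x j s y < r \<longrightarrow> u j (s,y) \<ge> \<phi> j (s,y))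
       \<and> u i (t,x) = \<phi> i (t,x)"
      then have phi: "C1star N T \<phi> \<phi>t \<phi>x" and P: "inJT N T i t x" and r: "0 < r"
        and loc: "\<forall>j s y. inJT N T j s y \<and> pdist i t x j s y < r \<longrightarrow> u j (s,y) \<ge> \<phi> j (s,y)"
        and tc: "u i (t,x) = \<phi> i (t,x)" by blast+
      have loc': "\<forall>j s y. inJT N T j s y \<and> pdist i t x j s y < r \<longrightarrow> - u j (s,y) \<le> - \<phi> j (s,y)"
        using loc by simp
      obtain \<psi>' \<psi>t' \<psi>x' where psi': "C1star N T \<psi>' \<psi>t' \<psi>x'"
        and gl': "\<forall>j s y. inJT N T j s y \<longrightarrow> - u j (s,y) \<le> \<psi>' j (s,y)"
        and eq': "\<forall>j s y. pdist i t x j s y = 0 \<longrightarrow>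
           \<psi>' j (s,y) = - \<phi> j (s,y) \<and> \<psi>t' j (s,y) = - \<phi>t j (s,y) \<and> \<psi>x' j (s,y) = - \<phi>x j (s,y)"
        using localize[OF T lsc_neg[OF us] C1star_neg[OF phi] r loc'] by blast
      define \<psi> where "\<psi> j p = - \<psi>' j p" for j p
      define \<psi>t where "\<psi>t j p = - \<psi>t' j p" for j p
      define \<psi>x where "\<psi>x j p = - \<psi>x' j p" for j p
      have psi: "C1star N T \<psi> \<psi>t \<psi>x" using C1star_neg[OF psi'] unfolding \<psi>_def \<psi>t_def \<psi>x_def .
      have gl: "\<forall>j s y. inJT N T j s y \<longrightarrow> u j (s,y) \<ge> \<psi> j (s,y)"
        using gl' unfolding \<psi>_def by force
      have eq: "\<forall>j s y. pdist i t x j s y = 0 \<longrightarrow>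
           \<psi> j (s,y) = \<phi> j (s,y) \<and> \<psi>t j (s,y) = \<phi>t j (s,y) \<and> \<psi>x j (s,y) = \<phi>x j (s,y)"
        using eq' unfolding \<psi>_def \<psi>t_def \<psi>x_def by simp
      have eqP: "\<psi> i (t,x) = \<phi> i (t,x)" "\<psi>t i (t,x) = \<phi>t i (t,x)" "\<psi>x i (t,x) = \<phi>x i (t,x)"
        using eq pd0[of i t x] by auto
      have tc': "u i (t,x) = \<psi> i (t,x)" using tc eqP by simp
      have R: "(0 < x \<longrightarrow> \<psi>t i (t,x) + H i (\<psi>x i (t,x)) \<ge> 0)"
        using C psi P gl tc' by blast
      show "\<phi>t i (t,x) + H i (\<phi>x i (t,x)) \<ge> 0" if "0 < x" using R eqP that by simp
      show "\<phi>t i (t,0) + H0 N H (\<lambda>j. \<phi>x j (t,0)) \<ge> 0" if x0: "x = 0"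
      proof -
        have "\<psi>t i (t,0) + H0 N H (\<lambda>j. \<psi>x j (t,0)) \<ge> 0"
          by (rule slope_super[OF N A C psi gl]) (use P tc' x0 in auto)
        moreover have "(\<lambda>j. \<psi>x j (t,0)) = (\<lambda>j. \<phi>x j (t,0))"
          using eq pd00[of i t] x0 by auto
        ultimately show "\<phi>t i (t,0) + H0 N H (\<lambda>j. \<phi>x j (t,0)) \<ge> 0" using eqP x0 by simp
      qed
    qed
  qed
qed


end
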